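(* Let $A=(a_{ij})$ be a real symmetric $n\times n$ matrix with positive diagonal entries, and suppose there is $\gamma>0$ such that $a_{ii}a_{jj}\ge\gamma^2a_{ij}^2$ for all $i\ne j$. Then every eigenvalue of $A$ lies in $\bigcup_{i=1}^n B\big(a_{ii},a_{ii}(n-1)/\gamma\big)$, where $B(c,r)$ denotes the closed ball (interval) of center $c$ and radius $r$. *)

theory Defs
  imports "HOL-Analysis.Analysis"
begin

definition mat_eigenvalue :: "real^'n^'n \<Rightarrow> real \<Rightarrow> bool" where
  "mat_eigenvalue A l \<longleftrightarrow> (\<exists>v. v \<noteq> 0 \<and> A *v v = l *\<^sub>R v)"

end

theory Submission
  imports Defs
begin

theorem theorem6p4:
  fixes A :: "real^'n^'n" and \<gamma> :: real and l :: real
  assumes "transpose A = A"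
    and "\<And>i. A $ i $ i > 0"
    and "\<gamma> > 0"
    and "\<And>i j. i \<noteq> j \<Longrightarrow> A $ i $ i * A $ j $ j \<ge> \<gamma>\<^sup>2 * (A $ i $ j)\<^sup>2"
    and "mat_eigenvalue A l"
  shows "l \<in> (\<Union>i. cball (A $ i $ i) (A $ i $ i * (real CARD('n) - 1) / \<gamma>))"
proof -
  note pos = assms(2) and g = assms(3) and off = assms(4)
  obtain v where v0: "v \<noteq> 0" and ev: "A *v v = l *\<^sub>R v"
    using assms(5) unfolding mat_eigenvalue_def by blast
  define s where "s j = sqrt (A $ j $ j)" for j
  have spos: "s j > 0" for j using pos[of j] by (simp add: s_def)
  have ssq: "s j * s j = A $ j $ j" for j using pos[of j] by (simp add: s_def)
  define u where "u j = v $ j * s j" for j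
  define M where "M = Max (range (\<lambda>j. \<bar>u j\<bar>))"
  have "M \<in> range (\<lambda>j. \<bar>u j\<bar>)" unfolding M_def by (rule Max_in) auto
  then obtain i where Mi: "M = \<bar>u i\<bar>" by auto
  have umax: "\<bar>u j\<bar> \<le> \<bar>u i\<bar>" for j
  proof -
    have "\<bar>u j\<bar> \<le> M" unfolding M_def by (rule Max_ge) auto
    then show ?thesis using Mi by simp
  qed
  obtain j0 where "v $ j0 \<noteq> 0" using v0 by (auto simp: vec_eq_iff)
  then have "u j0 \<noteq> 0" using spos[of j0] by (simp add: u_def)
  then have ui: "\<bar>u i\<bar> > 0" using umax[of j0] by linarith
  have vj: "v $ j = u j / s j" for j using spos[of j] by (simp add: u_def)
  have aij: "\<bar>A $ i $ j\<bar> \<le> s i * s j / \<gamma>" if "j \<noteq> i" for j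
  proof -
    have "(\<gamma> * \<bar>A $ i $ j\<bar>)\<^sup>2 \<le> (s i * s j)\<^sup>2"
    proof -
      have "(s i * s j)\<^sup>2 = A $ i $ i * A $ j $ j"
        using ssq[of i] ssq[of j] by (simp add: power2_eq_square algebra_simps)
      then show ?thesis using off[of i j] that by (simp add: power_mult_distrib)
    qed
    then have "\<gamma> * \<bar>A $ i $ j\<bar> \<le> s i * s j"
    proof (rule power2_le_imp_le)
      show "0 \<le> s i * s j" using spos[of i] spos[of j] by simp
    qed
    then show ?thesis using g by (simp add: pos_le_divide_eq mult.commute)
  qed
  have trm: "\<bar>A $ i $ j * v $ j\<bar> \<le> s i * \<bar>u i\<bar> / \<gamma>" if "j \<noteq> i" for j
  proof -
    have "\<bar>A $ i $ j * v $ j\<bar> = \<bar>A $ i $ j\<bar> * \<bar>u j\<bar> / s j"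
      using spos[of j] by (simp add: vj abs_mult)
    also have "\<dots> \<le> (s i * s j / \<gamma>) * \<bar>u i\<bar> / s j"
      using aij[OF that] umax[of j] spos[of j]
      by (intro divide_right_mono mult_mono) auto
    also have "\<dots> = s i * \<bar>u i\<bar> / \<gamma>" using spos[of j] by simp
    finally show ?thesis .
  qed
  have "(A *v v) $ i = (\<Sum>j\<in>UNIV. A $ i $ j * v $ j)"
    by (simp add: matrix_vector_mult_def)
  also have "\<dots> = A $ i $ i * v $ i + (\<Sum>j\<in>UNIV - {i}. A $ i $ j * v $ j)"
    by (simp add: sum.remove)
  finally have "(l - A $ i $ i) * v $ i = (\<Sum>j\<in>UNIV - {i}. A $ i $ j * v $ j)"
    using ev by (simp add: algebra_simps)
  then have "\<bar>l - A $ i $ i\<bar> * (\<bar>u i\<bar> / s i) \<le> (\<Sum>j\<in>UNIV - {i}. \<bar>A $ i $ j * v $ j\<bar>)"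
  proof -
    have "\<bar>l - A $ i $ i\<bar> * (\<bar>u i\<bar> / s i) = \<bar>(l - A $ i $ i) * v $ i\<bar>"
      using spos[of i] by (simp add: vj abs_mult)
    also have "\<dots> \<le> (\<Sum>j\<in>UNIV - {i}. \<bar>A $ i $ j * v $ j\<bar>)"
      unfolding \<open>(l - A $ i $ i) * v $ i = _\<close> by (rule sum_abs)
    finally show ?thesis .
  qed
  also have "\<dots> \<le> (\<Sum>j\<in>UNIV - {i}. s i * \<bar>u i\<bar> / \<gamma>)"
    by (rule sum_mono) (use trm in auto)
  also have "\<dots> = (real CARD('n) - 1) * (s i * \<bar>u i\<bar> / \<gamma>)"
    by (simp add: card_Diff_singleton of_nat_diff)
  finally have "\<bar>l - A $ i $ i\<bar> * (\<bar>u i\<bar> / s i) * (s i / \<bar>u i\<bar>)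
     \<le> (real CARD('n) - 1) * (s i * \<bar>u i\<bar> / \<gamma>) * (s i / \<bar>u i\<bar>)"
    using spos[of i] ui by (intro mult_right_mono) auto
  moreover have "\<bar>l - A $ i $ i\<bar> * (\<bar>u i\<bar> / s i) * (s i / \<bar>u i\<bar>) = \<bar>l - A $ i $ i\<bar>"
    using spos[of i] ui by simp
  moreover have "(real CARD('n) - 1) * (s i * \<bar>u i\<bar> / \<gamma>) * (s i / \<bar>u i\<bar>) = (s i * s i) * (real CARD('n) - 1) / \<gamma>"
    using spos[of i] ui by simp
  ultimately have "\<bar>l - A $ i $ i\<bar> \<le> A $ i $ i * (real CARD('n) - 1) / \<gamma>"
    using ssq[of i] by simp
  then show ?thesis by (auto simp: dist_real_def abs_minus_commute)
qed

end
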